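(* Let $k\ge 1$. Let $\mathcal M^\Box_{2k+1,0}$ (resp. $\mathcal M^\Box_{2k+1,1}$) be the set of elements of $\mathcal M^\Box_{2k+1}$ whose central square $k+1$ is land (resp. water). Then $\mathrm{red}\circ\mathrm{contr}$ restricts to bijections $\mathcal M^\Box_{2k+1,0}\to\mathcal N_k$ and $\mathcal M^\Box_{2k+1,1}\to \mathcal N_{k,1}\cup\mathcal N_{k,2}\cup\{R_{\mathrm{land}}\}$. Consequently $M^\Box_{2k+1} = N_k + N_{k,1}+N_{k,2}+1$.
   Context: Colorings. Each square is colored water or land. Two distinct squares are adjacent if they share an edge after all edge identifications; a set of squares is connected if its induced adjacency graph is connected (empty set counts as connected). (N1): the water is connected. For an interior (non-boundary) vertex $v$, its square-degree is the number of distinct squares having $v$ as a corner. (N2$\Box$): no interior vertex of square-degree $4$ has all incident squares water. A $2\times k$ Nurikabe rectangle is a coloring of the $2\times k$ grid (columns $1,\dots,k$ left to right, no identifications) with connected water and no $2\times 2$ block of water squares; $\mathcal N_k$ is the set of these, $N_k=|\mathcal N_k|$; $\mathcal N_{k,i}$ is the subset with exactly $i$ water squares in column $k$, $N_{k,i}=|\mathcal N_{k,i}|$. $R_{\mathrm{land}}\in\mathcal N_k$ is the all-land rectangle. Tile $[0,n]\times[0,1]$ by unit squares $[j-1,j]\times[0,1]$, called square $j$. The $1\times n$ Möbius strip identifies $(x,1)\sim(n-x,0)$ for $x\in[0,n]$; its boundary is the image of the vertical sides. $\mathcal M^\Box_n$ is the set of colorings of the $1\times n$ Möbius strip satisfying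 (N1) and (N2$\Box$), $M^\Box_n=|\mathcal M^\Box_n|$. Contraction: for a coloring of the $1\times(2k+1)$ Möbius strip, $\mathrm{contr}$ gives the coloring of the $1\times 2k$ Möbius strip obtained by deleting square $k+1$, with square $j\le k$ keeping position $j$ and square $j\ge k+2$ moving to position $j-1$. Rectangular reduction: for a coloring of the $1\times 2k$ Möbius strip, $\mathrm{red}$ gives the coloring of the $2\times k$ grid whose column $j$ has top square colored as square $j$ and bottom square colored as square $2k+1-j$. *)

theory Defs
  imports Main
begin

(* Colourings: True = water, False = land. *)

definition connected_in :: "('a \<Rightarrow> 'a \<Rightarrow> bool) \<Rightarrow> 'a set \<Rightarrow> bool" where
  "connected_in adj S \<longleftrightarrow>
     (\<forall>a\<in>S. \<forall>b\<in>S. (a, b) \<in> {(x, y). x \<in> S \<and> y \<in> S \<and> adj x y}\<^sup>*)"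

(* Squares are 1..n (square j = [j-1,j]x[0,1]). Under (x,1) ~ (n-x,0), the top side
   of square j is glued to the bottom side of square n+1-j; squares j, j+1 share a
   vertical side. *)
definition mob_adj :: "nat \<Rightarrow> nat \<Rightarrow> nat \<Rightarrow> bool" where
  "mob_adj n a b \<longleftrightarrow> a \<in> {1..n} \<and> b \<in> {1..n} \<and> a \<noteq> b \<and>
     (a + 1 = b \<or> b + 1 = a \<or> a + b = n + 1)"

definition mob_colourings :: "nat \<Rightarrow> (nat \<Rightarrow> bool) set" where
  "mob_colourings n = {c. \<forall>j. j \<notin> {1..n} \<longrightarrow> \<not> c j}"

definition mob_water :: "nat \<Rightarrow> (nat \<Rightarrow> bool) \<Rightarrow> nat set" where
  "mob_water n c = {j \<in> {1..n}. c j}"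

(* Interior vertices: the classes {(i,0),(n-i,1)} for 1 <= i <= n-1 (the points with
   x = 0 or x = n lie on the boundary). Squares having vertex i as a corner:
   bottom corners of squares i, i+1 and top corners of squares n-i, n-i+1. *)
definition mob_vertex_squares :: "nat \<Rightarrow> nat \<Rightarrow> nat set" where
  "mob_vertex_squares n i = {i, i + 1, n - i, n + 1 - i}"

definition mob_square_degree :: "nat \<Rightarrow> nat \<Rightarrow> nat" where
  "mob_square_degree n i = card (mob_vertex_squares n i)"

definition mob_N1 :: "nat \<Rightarrow> (nat \<Rightarrow> bool) \<Rightarrow> bool" where
  "mob_N1 n c \<longleftrightarrow> connected_in (mob_adj n) (mob_water n c)"

definition mob_N2box :: "nat \<Rightarrow> (nat \<Rightarrow> bool) \<Rightarrow> bool" where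
  "mob_N2box n c \<longleftrightarrow>
     (\<forall>i\<in>{1..n-1}. mob_square_degree n i = 4 \<longrightarrow> \<not> (\<forall>s\<in>mob_vertex_squares n i. c s))"

definition Mbox :: "nat \<Rightarrow> (nat \<Rightarrow> bool) set" where
  "Mbox n = {c \<in> mob_colourings n. mob_N1 n c \<and> mob_N2box n c}"

(* Squares (r, j), r \<in> {1,2} (1 = top, 2 = bottom), j \<in> {1..k} (column). *)
definition grid_adj :: "nat \<Rightarrow> nat \<times> nat \<Rightarrow> nat \<times> nat \<Rightarrow> bool" where
  "grid_adj k a b \<longleftrightarrow> fst a \<in> {1,2} \<and> fst b \<in> {1,2} \<and> snd a \<in> {1..k} \<and> snd b \<in> {1..k} \<and>
     ((fst a = fst b \<and> (snd a + 1 = snd b \<or> snd b + 1 = snd a)) \<or>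
      (snd a = snd b \<and> fst a \<noteq> fst b))"

definition grid_colourings :: "nat \<Rightarrow> (nat \<times> nat \<Rightarrow> bool) set" where
  "grid_colourings k = {g. \<forall>r j. (r \<notin> {1,2} \<or> j \<notin> {1..k}) \<longrightarrow> \<not> g (r, j)}"

definition grid_water :: "nat \<Rightarrow> (nat \<times> nat \<Rightarrow> bool) \<Rightarrow> (nat \<times> nat) set" where
  "grid_water k g = {(r, j). r \<in> {1,2} \<and> j \<in> {1..k} \<and> g (r, j)}"

definition Nrect :: "nat \<Rightarrow> (nat \<times> nat \<Rightarrow> bool) set" where
  "Nrect k = {g \<in> grid_colourings k. connected_in (grid_adj k) (grid_water k g) \<and>
      \<not> (\<exists>j\<in>{1..<k}. g (1, j) \<and> g (2, j) \<and> g (1, j + 1) \<and> g (2, j + 1))}"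

definition Nrect_col :: "nat \<Rightarrow> nat \<Rightarrow> (nat \<times> nat \<Rightarrow> bool) set" where
  "Nrect_col k i = {g \<in> Nrect k. card {r \<in> {1::nat,2}. g (r, k)} = i}"

definition R_land :: "nat \<times> nat \<Rightarrow> bool" where
  "R_land = (\<lambda>_. False)"

definition contr :: "nat \<Rightarrow> (nat \<Rightarrow> bool) \<Rightarrow> (nat \<Rightarrow> bool)" where
  "contr k c = (\<lambda>j. if j \<in> {1..2*k} then (if j \<le> k then c j else c (j + 1)) else False)"

definition red :: "nat \<Rightarrow> (nat \<Rightarrow> bool) \<Rightarrow> (nat \<times> nat \<Rightarrow> bool)" where
  "red k c = (\<lambda>(r, j). if j \<in> {1..k} then
                        (if r = 1 then c j else if r = 2 then c (2*k + 1 - j) else False)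
                      else False)"

end

theory Submission
  imports Defs
begin

lemma rtrancl_map_gen:
  assumes "(a,b) \<in> R\<^sup>*" "\<And>x y. (x,y)\<in>R \<Longrightarrow> (f x, f y) \<in> R'"
  shows "(f a, f b) \<in> R'\<^sup>*"
  using assms(1) by induction (auto intro: rtrancl_into_rtrancl assms(2))

lemma conn_image:
  assumes "connected_in adj S" "\<And>x y. x\<in>S \<Longrightarrow> y\<in>S \<Longrightarrow> adj x y \<Longrightarrow> adj' (f x) (f y)" "T = f ` S"
  shows "connected_in adj' T"
  unfolding connected_in_def
proof (intro ballI)
  fix a' b' assume "a'\<in>T" "b'\<in>T"
  then obtain a b where ab: "a\<in>S" "b\<in>S" "a'=f a" "b' = f b" using assms(3) by auto
  have "(a,b) \<in> {(x,y). x\<in>S \<and> y\<in>S \<and> adj x y}\<^sup>*" using assms(1) ab unfolding connected_in_def by auto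
  then have "(f a, f b) \<in> {(x,y). x\<in>T \<and> y\<in>T \<and> adj' x y}\<^sup>*"
    by (rule rtrancl_map_gen) (use assms(2,3) in auto)
  then show "(a',b') \<in> {(x,y). x\<in>T \<and> y\<in>T \<and> adj' x y}\<^sup>*" using ab by simp
qed

lemma conn_insert:
  assumes "connected_in adj W" "x\<in>W" "adj x c" "adj c x"
  shows "connected_in adj (insert c W)"
  unfolding connected_in_def
proof (intro ballI)
  let ?R = "{(x,y). x\<in>W \<and> y\<in>W \<and> adj x y}"
  let ?R' = "{(x,y). x\<in>insert c W \<and> y\<in>insert c W \<and> adj x y}"
  have sub: "?R\<^sup>* \<subseteq> ?R'\<^sup>*" by (rule rtrancl_mono) auto
  have W: "(a,b)\<in>?R'\<^sup>*" if "a\<in>W" "b\<in>W" for a b using assms(1) that sub unfolding connected_in_def by blast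
  have cx: "(c,x)\<in>?R'" "(x,c)\<in>?R'" using assms by auto
  fix a b assume "a\<in>insert c W" "b\<in>insert c W"
  then consider "a=c" "b=c" | "a=c" "b\<in>W" | "a\<in>W" "b=c" | "a\<in>W" "b\<in>W" by auto
  then show "(a,b)\<in>?R'\<^sup>*"
  proof cases
    case 1 then show ?thesis by simp
  next
    case 2 then show ?thesis using converse_rtrancl_into_rtrancl[OF cx(1) W[OF assms(2) 2(2)]] by simp
  next
    case 3 then show ?thesis using rtrancl_into_rtrancl[OF W[OF 3(1) assms(2)] cx(2)] by simp
  next
    case 4 then show ?thesis using W by simp
  qed
qed

lemma conn_remove:
  assumes "connected_in adj (insert c W)" "c\<notin>W"
    "\<And>z y. z\<in>W \<Longrightarrow> y\<in>W \<Longrightarrow> adj z c \<Longrightarrow> adj c y \<Longrightarrow> z\<noteq>y \<Longrightarrow> adj z y"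
  shows "connected_in adj W"
  unfolding connected_in_def
proof (intro ballI)
  let ?R = "{(x,y). x\<in>W \<and> y\<in>W \<and> adj x y}"
  let ?R' = "{(x,y). x\<in>insert c W \<and> y\<in>insert c W \<and> adj x y}"
  fix a b assume a: "a\<in>W" and b: "b\<in>W"
  have "(a,b)\<in>?R'\<^sup>*" using assms(1) a b unfolding connected_in_def by blast
  then have "(b\<in>W \<and> (a,b)\<in>?R\<^sup>*) \<or> (b=c \<and> (\<exists>z\<in>W. adj z c \<and> (a,z)\<in>?R\<^sup>*))"
  proof induction
    case base then show ?case using a by simp
  next
    case (step y y')
    from step.hyps(2) have y: "y\<in>insert c W" "y'\<in>insert c W" "adj y y'" by auto
    from step.IH show ?case
    proof
      assume h: "y\<in>W \<and> (a,y)\<in>?R\<^sup>*"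
      show ?case proof (cases "y'=c")
        case True then show ?thesis using h y by auto
      next
        case False then have "y'\<in>W" using y by auto
        then have "(y,y')\<in>?R" using h y by auto
        then show ?thesis using h \<open>y'\<in>W\<close> by (auto intro: rtrancl_into_rtrancl)
      qed
    next
      assume h: "y=c \<and> (\<exists>z\<in>W. adj z c \<and> (a,z)\<in>?R\<^sup>*)"
      then obtain z where z: "z\<in>W" "adj z c" "(a,z)\<in>?R\<^sup>*" by auto
      show ?case proof (cases "y'=c")
        case True then show ?thesis using h by auto
      next
        case False then have y'W: "y'\<in>W" using y by auto
        show ?thesis proof (cases "z=y'")
          case True then show ?thesis using z y'W by auto
        next
          case False
          then have "adj z y'" using assms(3)[OF z(1) y'W z(2)] y h by auto
          then have "(z,y')\<in>?R" using z y'W by auto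
          then show ?thesis using rtrancl_into_rtrancl[OF z(3)] y'W by auto
        qed
      qed
    qed
  qed
  then show "(a,b)\<in>?R\<^sup>*" using b assms(2) by auto
qed

lemma conn_nbr:
  assumes "connected_in adj (insert c W)" "a\<in>W" "c\<notin>W" "\<not> adj c c"
  shows "\<exists>x\<in>W. adj c x"
proof -
  let ?R' = "{(x,y). x\<in>insert c W \<and> y\<in>insert c W \<and> adj x y}"
  have "(c,a)\<in>?R'\<^sup>*" using assms(1,2) unfolding connected_in_def by blast
  moreover have "c\<noteq>a" using assms by auto
  ultimately obtain y where "(c,y)\<in>?R'" by (auto elim: converse_rtranclE)
  then show ?thesis using assms(4) by auto
qed

definition phi :: "nat \<Rightarrow> nat \<Rightarrow> nat \<times> nat" where
  "phi k j = (if j \<le> k then (1,j) else (2, 2*k+2-j))"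
definition psi :: "nat \<Rightarrow> nat \<times> nat \<Rightarrow> nat" where
  "psi k p = (if fst p = 1 then snd p else 2*k+2-snd p)"

lemma rc: "red k (contr k c) = (\<lambda>(r,j). if j\<in>{1..k} then
   (if r=1 then c j else if r=2 then c (2*k+2-j) else False) else False)"
  by (rule ext) (auto simp: red_def contr_def Suc_diff_le)

lemma water_img1:
  assumes "c\<in>mob_colourings (2*k+1)"
  shows "grid_water k ((red k \<circ> contr k) c) = phi k ` (mob_water (2*k+1) c - {k+1})"
proof
  show "grid_water k ((red k \<circ> contr k) c) \<subseteq> phi k ` (mob_water (2*k+1) c - {k+1})"
  proof
    fix p assume p: "p \<in> grid_water k ((red k \<circ> contr k) c)"
    obtain r j where pr: "p = (r,j)" by force
    show "p \<in> phi k ` (mob_water (2*k+1) c - {k+1})"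
    proof (cases "r = 1")
      case True
      then show ?thesis using p pr
        by (intro image_eqI[where x=j]) (auto simp: rc grid_water_def mob_water_def phi_def)
    next
      case False
      then show ?thesis using p pr
        by (intro image_eqI[where x="2*k+2-j"]) (auto simp: rc grid_water_def mob_water_def phi_def)
    qed
  qed
next
  show "phi k ` (mob_water (2*k+1) c - {k+1}) \<subseteq> grid_water k ((red k \<circ> contr k) c)"
    by (auto simp: rc grid_water_def mob_water_def phi_def)
qed

lemma water_img2:
  assumes "c\<in>mob_colourings (2*k+1)"
  shows "mob_water (2*k+1) c - {k+1} = psi k ` grid_water k ((red k \<circ> contr k) c)"
proof
  show "psi k ` grid_water k ((red k \<circ> contr k) c) \<subseteq> mob_water (2*k+1) c - {k+1}"
    by (auto simp: rc grid_water_def mob_water_def psi_def)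
next
  show "mob_water (2*k+1) c - {k+1} \<subseteq> psi k ` grid_water k ((red k \<circ> contr k) c)"
  proof
    fix j assume j: "j \<in> mob_water (2*k+1) c - {k+1}"
    show "j \<in> psi k ` grid_water k ((red k \<circ> contr k) c)"
    proof (cases "j \<le> k")
      case True
      then show ?thesis using j
        by (intro image_eqI[where x="(1,j)"]) (auto simp: rc grid_water_def mob_water_def psi_def)
    next
      case False
      then show ?thesis using j
        by (intro image_eqI[where x="(2,2*k+2-j)"]) (auto simp: rc grid_water_def mob_water_def psi_def)
    qed
  qed
qed

lemma adj_phi:
  assumes "x\<in>{1..2*k+1}-{k+1}" "y\<in>{1..2*k+1}-{k+1}" "mob_adj (2*k+1) x y"
  shows "grid_adj k (phi k x) (phi k y)"
  using assms by (auto simp: mob_adj_def grid_adj_def phi_def)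

lemma adj_psi:
  assumes "fst p\<in>{1,2}" "snd p\<in>{1..k}" "fst q\<in>{1,2}" "snd q\<in>{1..k}" "grid_adj k p q"
  shows "mob_adj (2*k+1) (psi k p) (psi k q)"
  using assms by (auto simp: mob_adj_def grid_adj_def psi_def)


lemma deg4:
  assumes "k\<ge>1" "i\<in>{1..2*k}"
  shows "mob_square_degree (2*k+1) i = 4 \<longleftrightarrow> i \<noteq> k \<and> i \<noteq> k+1"
proof (cases "i = k \<or> i = k+1")
  case True
  then have "mob_vertex_squares (2*k+1) i = {k,k+1,k+2}"
    by (auto simp: mob_vertex_squares_def)
  then show ?thesis using True by (simp add: mob_square_degree_def)
next
  case False
  then show ?thesis using assms
    by (auto simp: mob_square_degree_def mob_vertex_squares_def card_insert_if)
qed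

lemma N2_equiv:
  assumes "k\<ge>1"
  shows "mob_N2box (2*k+1) c \<longleftrightarrow>
    \<not> (\<exists>j\<in>{1..<k}. red k (contr k c) (1, j) \<and> red k (contr k c) (2, j)
        \<and> red k (contr k c) (1, j + 1) \<and> red k (contr k c) (2, j + 1))"
proof -
  have L: "mob_N2box (2*k+1) c \<longleftrightarrow>
     (\<forall>i\<in>{1..2*k}. i \<noteq> k \<and> i \<noteq> k+1 \<longrightarrow> \<not> (c i \<and> c (i+1) \<and> c (2*k+1-i) \<and> c (2*k+2-i)))"
    unfolding mob_N2box_def using deg4[OF assms]
    by (simp add: mob_vertex_squares_def)
  have R: "(\<exists>j\<in>{1..<k}. red k (contr k c) (1, j) \<and> red k (contr k c) (2, j)
        \<and> red k (contr k c) (1, j + 1) \<and> red k (contr k c) (2, j + 1)) \<longleftrightarrow>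
     (\<exists>j\<in>{1..<k}. c j \<and> c (2*k+2-j) \<and> c (j+1) \<and> c (2*k+1-j))"
    by (auto simp: rc intro!: bexI)
  have "(\<exists>i\<in>{1..2*k}. i \<noteq> k \<and> i \<noteq> k+1 \<and> (c i \<and> c (i+1) \<and> c (2*k+1-i) \<and> c (2*k+2-i)))
     \<longleftrightarrow> (\<exists>j\<in>{1..<k}. c j \<and> c (2*k+2-j) \<and> c (j+1) \<and> c (2*k+1-j))"
  proof
    assume "\<exists>i\<in>{1..2*k}. i \<noteq> k \<and> i \<noteq> k+1 \<and> (c i \<and> c (i+1) \<and> c (2*k+1-i) \<and> c (2*k+2-i))"
    then obtain i where i: "i\<in>{1..2*k}" "i \<noteq> k" "i \<noteq> k+1" "c i" "c (i+1)" "c (2*k+1-i)" "c (2*k+2-i)"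
      by blast
    show "\<exists>j\<in>{1..<k}. c j \<and> c (2*k+2-j) \<and> c (j+1) \<and> c (2*k+1-j)"
    proof (cases "i < k")
      case True then show ?thesis using i by (intro bexI[where x=i]) auto
    next
      case False
      have e1: "2*k+2-(2*k+1-i) = i+1" "2*k+1-i+1 = 2*k+2-i" "2*k+1-(2*k+1-i) = i"
        using False i(1) by auto
      show ?thesis using False i e1 by (intro bexI[where x="2*k+1-i"]) auto
    qed
  next
    assume "\<exists>j\<in>{1..<k}. c j \<and> c (2*k+2-j) \<and> c (j+1) \<and> c (2*k+1-j)"
    then obtain j where j: "j\<in>{1..<k}" "c j" "c (2*k+2-j)" "c (j+1)" "c (2*k+1-j)" by blast
    show "\<exists>i\<in>{1..2*k}. i \<noteq> k \<and> i \<noteq> k+1 \<and> (c i \<and> c (i+1) \<and> c (2*k+1-i) \<and> c (2*k+2-i))"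
      using j by (intro bexI[where x=j]) auto
  qed
  then show ?thesis using L R by blast
qed

lemma mob_adj_sym: "mob_adj n a b \<Longrightarrow> mob_adj n b a"
  by (auto simp: mob_adj_def)

lemma conn_equiv0:
  assumes "k\<ge>1" "c\<in>mob_colourings (2*k+1)"
  shows "connected_in (mob_adj (2*k+1)) (mob_water (2*k+1) c - {k+1}) \<longleftrightarrow>
         connected_in (grid_adj k) (grid_water k (red k (contr k c)))"
proof
  assume "connected_in (mob_adj (2*k+1)) (mob_water (2*k+1) c - {k+1})"
  then show "connected_in (grid_adj k) (grid_water k (red k (contr k c)))"
    by (rule conn_image[where f="phi k"]) (use water_img1[OF assms(2)] adj_phi in \<open>auto simp: mob_water_def\<close>)
next
  assume "connected_in (grid_adj k) (grid_water k (red k (contr k c)))"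
  then show "connected_in (mob_adj (2*k+1)) (mob_water (2*k+1) c - {k+1})"
    by (rule conn_image[where f="psi k"]) (use water_img2[OF assms(2)] adj_psi in \<open>auto simp: grid_water_def\<close>)
qed

lemma N1_land:
  assumes "k\<ge>1" "c\<in>mob_colourings (2*k+1)" "\<not> c (k+1)"
  shows "mob_N1 (2*k+1) c \<longleftrightarrow> connected_in (grid_adj k) (grid_water k (red k (contr k c)))"
proof -
  have "mob_water (2*k+1) c - {k+1} = mob_water (2*k+1) c" using assms(3) by (auto simp: mob_water_def)
  then show ?thesis using conn_equiv0[OF assms(1,2)] by (simp add: mob_N1_def)
qed

lemma N1_water:
  assumes "k\<ge>1" "c\<in>mob_colourings (2*k+1)" "c (k+1)"
  shows "mob_N1 (2*k+1) c \<longleftrightarrow>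
     (connected_in (grid_adj k) (grid_water k (red k (contr k c)))
        \<and> (red k (contr k c) (1,k) \<or> red k (contr k c) (2,k)))
     \<or> grid_water k (red k (contr k c)) = {}"
proof -
  define W where "W = mob_water (2*k+1) c - {k+1}"
  have ins: "mob_water (2*k+1) c = insert (k+1) W" using assms(1,3) by (auto simp: mob_water_def W_def)
  have notin: "k+1 \<notin> W" by (simp add: W_def)
  have cw: "connected_in (mob_adj (2*k+1)) W \<longleftrightarrow> connected_in (grid_adj k) (grid_water k (red k (contr k c)))"
    unfolding W_def by (rule conn_equiv0[OF assms(1,2)])
  have emp: "W = {} \<longleftrightarrow> grid_water k (red k (contr k c)) = {}"
    using water_img1[OF assms(2)] unfolding W_def by auto
  have nb: "(\<exists>x\<in>W. mob_adj (2*k+1) (k+1) x) \<longleftrightarrow> (red k (contr k c) (1,k) \<or> red k (contr k c) (2,k))"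
  proof -
    have "(\<exists>x\<in>W. mob_adj (2*k+1) (k+1) x) \<longleftrightarrow> c k \<or> c (k+2)"
      using assms(1) by (auto simp: W_def mob_water_def mob_adj_def)
    moreover have "2*k+2-k = k+2" by simp
    ultimately show ?thesis using assms(1) by (simp add: rc)
  qed
  have clique: "mob_adj (2*k+1) z y" if "z\<in>W" "y\<in>W" "mob_adj (2*k+1) z (k+1)" "mob_adj (2*k+1) (k+1) y" "z\<noteq>y" for z y
    using that assms(1) by (auto simp: W_def mob_water_def mob_adj_def)
  show ?thesis
  proof
    assume "mob_N1 (2*k+1) c"
    then have C: "connected_in (mob_adj (2*k+1)) (insert (k+1) W)" unfolding mob_N1_def ins .
    show "(connected_in (grid_adj k) (grid_water k (red k (contr k c)))
        \<and> (red k (contr k c) (1,k) \<or> red k (contr k c) (2,k)))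
     \<or> grid_water k (red k (contr k c)) = {}"
    proof (cases "W = {}")
      case True then show ?thesis using emp by simp
    next
      case False
      then obtain a where "a\<in>W" by auto
      then have "\<exists>x\<in>W. mob_adj (2*k+1) (k+1) x"
        using conn_nbr[OF C _ notin] by (auto simp: mob_adj_def)
      moreover have "connected_in (mob_adj (2*k+1)) W"
        using conn_remove[OF C notin clique] by blast
      ultimately show ?thesis using nb cw by simp
    qed
  next
    assume H: "(connected_in (grid_adj k) (grid_water k (red k (contr k c)))
        \<and> (red k (contr k c) (1,k) \<or> red k (contr k c) (2,k)))
     \<or> grid_water k (red k (contr k c)) = {}"
    show "mob_N1 (2*k+1) c"
    proof (cases "W = {}")
      case True then show ?thesis unfolding mob_N1_def ins by (simp add: connected_in_def)
    next
      case False
      then have "connected_in (grid_adj k) (grid_water k (red k (contr k c)))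
        \<and> (red k (contr k c) (1,k) \<or> red k (contr k c) (2,k))" using H emp by blast
      then obtain x where x: "x\<in>W" "mob_adj (2*k+1) (k+1) x" and cW: "connected_in (mob_adj (2*k+1)) W"
        using nb cw by blast
      show ?thesis unfolding mob_N1_def ins
        by (rule conn_insert[OF cW x(1) mob_adj_sym[OF x(2)] x(2)])
    qed
  qed
qed


lemma rc_grid: "red k (contr k c) \<in> grid_colourings k"
  by (auto simp: rc grid_colourings_def)

lemma grid_R_land:
  assumes "g\<in>grid_colourings k"
  shows "grid_water k g = {} \<longleftrightarrow> g = R_land"
proof
  assume h: "grid_water k g = {}"
  show "g = R_land"
  proof
    fix p :: "nat \<times> nat"
    obtain r j where p: "p = (r,j)" by force
    show "g p = R_land p"
      using h assms unfolding p grid_water_def grid_colourings_def R_land_def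
      by (cases "r\<in>{1,2} \<and> j\<in>{1..k}") auto
  qed
qed (auto simp: grid_water_def R_land_def)

lemma col_card: "card {r \<in> {1::nat,2}. P r} = (if P 1 then 1 else 0) + (if P 2 then 1 else 0)"
proof -
  have "{r \<in> {1::nat,2}. P r} = (if P 1 then {1} else {}) \<union> (if P 2 then {2} else {})" by auto
  then show ?thesis by auto
qed

lemma Nrect_col12:
  "Nrect_col k 1 \<union> Nrect_col k 2 = {g\<in>Nrect k. g (1,k) \<or> g (2,k)}"
  unfolding Nrect_col_def col_card by auto

lemma R_land_Nrect: "R_land \<in> Nrect k"
  by (auto simp: Nrect_def R_land_def grid_colourings_def grid_water_def connected_in_def)

lemma img0:
  assumes "k\<ge>1" "c\<in>mob_colourings (2*k+1)" "\<not> c (k+1)"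
  shows "c\<in>Mbox (2*k+1) \<longleftrightarrow> red k (contr k c) \<in> Nrect k"
  using N1_land[OF assms] N2_equiv[OF assms(1), of c] assms(2) rc_grid[of k c]
  unfolding Mbox_def Nrect_def by blast

lemma img1:
  assumes "k\<ge>1" "c\<in>mob_colourings (2*k+1)" "c (k+1)"
  shows "c\<in>Mbox (2*k+1) \<longleftrightarrow> red k (contr k c) \<in> Nrect_col k 1 \<union> Nrect_col k 2 \<union> {R_land}"
proof -
  have RL: "red k (contr k c) = R_land \<longleftrightarrow> grid_water k (red k (contr k c)) = {}"
    using grid_R_land[OF rc_grid] by blast
  have noblk: "\<not> (\<exists>j\<in>{1..<k}. R_land (1, j) \<and> R_land (2, j) \<and> R_land (1, j + 1) \<and> R_land (2, j + 1))"
    by (simp add: R_land_def)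
  show ?thesis
    unfolding Nrect_col12
    using N1_water[OF assms] N2_equiv[OF assms(1), of c] assms(2) rc_grid[of k c] RL noblk
    unfolding Mbox_def Nrect_def by auto
qed

lemma inj_rc:
  assumes "c\<in>mob_colourings (2*k+1)" "c'\<in>mob_colourings (2*k+1)" "c (k+1) = c' (k+1)"
    "red k (contr k c) = red k (contr k c')"
  shows "c = c'"
proof
  fix j
  have A: "red k (contr k c) (1,j) = red k (contr k c') (1,j)" "red k (contr k c) (2,2*k+2-j) = red k (contr k c') (2,2*k+2-j)"
    using assms(4) by auto
  consider "j\<in>{1..k}" | "j = k+1" | "j\<in>{k+2..2*k+1}" | "j\<notin>{1..2*k+1}" by force
  then show "c j = c' j"
  proof cases
    case 1 then show ?thesis using A(1) by (simp add: rc)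
  next
    case 2 then show ?thesis using assms(3) by simp
  next
    case 3
    then have h: "2*k+2-j \<in> {1..k}" "2*k+2-(2*k+2-j) = j" by auto
    have "red k (contr k d) (2,2*k+2-j) = d j" for d
      unfolding rc using h by (simp del: atLeastAtMost_iff)
    then show ?thesis using A(2) by simp
  next
    case 4 then show ?thesis using assms(1,2) by (simp add: mob_colourings_def)
  qed
qed

lemma surj_rc:
  assumes "g\<in>grid_colourings k"
  shows "\<exists>c\<in>mob_colourings (2*k+1). c (k+1) = b \<and> red k (contr k c) = g"
proof -
  define c where "c = (\<lambda>j. if j\<in>{1..k} then g (1,j) else if j = k+1 then b
     else if j\<in>{k+2..2*k+1} then g (2, 2*k+2-j) else False)"
  have "c\<in>mob_colourings (2*k+1)" by (auto simp: c_def mob_colourings_def)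
  moreover have "c (k+1) = b" by (simp add: c_def)
  moreover have "red k (contr k c) = g"
  proof
    fix p :: "nat \<times> nat"
    obtain r j where p: "p = (r,j)" by force
    show "red k (contr k c) p = g p"
      using assms unfolding p
      by (cases "j\<in>{1..k}") (auto simp: rc c_def grid_colourings_def)
  qed
  ultimately show ?thesis by blast
qed

lemma finite_mob: "finite (mob_colourings n)"
proof -
  have "mob_colourings n \<subseteq> (\<lambda>S j. j\<in>S) ` Pow {1..n}"
  proof
    fix c assume c: "c\<in>mob_colourings n"
    show "c \<in> (\<lambda>S j. j\<in>S) ` Pow {1..n}"
      by (rule image_eqI[where x="{j\<in>{1..n}. c j}"]) (use c in \<open>auto simp: mob_colourings_def\<close>)
  qed
  then show ?thesis by (rule finite_subset) simp
qed

theorem lemma4p3: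
  fixes k :: nat
  assumes "k \<ge> 1"
  shows "bij_betw (red k \<circ> contr k) {c \<in> Mbox (2*k+1). \<not> c (k+1)} (Nrect k)
       \<and> bij_betw (red k \<circ> contr k) {c \<in> Mbox (2*k+1). c (k+1)}
           (Nrect_col k 1 \<union> Nrect_col k 2 \<union> {R_land})
       \<and> card (Mbox (2*k+1)) = card (Nrect k) + card (Nrect_col k 1) + card (Nrect_col k 2) + 1"
proof -
  have MC: "Mbox (2*k+1) \<subseteq> mob_colourings (2*k+1)" by (auto simp: Mbox_def)
  have B0: "bij_betw (red k \<circ> contr k) {c \<in> Mbox (2*k+1). \<not> c (k+1)} (Nrect k)"
    unfolding bij_betw_def
  proof
    show "inj_on (red k \<circ> contr k) {c \<in> Mbox (2*k+1). \<not> c (k+1)}"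
    proof (rule inj_onI)
      fix x y assume "x \<in> {c \<in> Mbox (2*k+1). \<not> c (k+1)}" "y \<in> {c \<in> Mbox (2*k+1). \<not> c (k+1)}"
        "(red k \<circ> contr k) x = (red k \<circ> contr k) y"
      then show "x = y" using inj_rc[of x k y] MC by auto
    qed
    show "(red k \<circ> contr k) ` {c \<in> Mbox (2*k+1). \<not> c (k+1)} = Nrect k"
    proof
      show "(red k \<circ> contr k) ` {c \<in> Mbox (2*k+1). \<not> c (k+1)} \<subseteq> Nrect k"
        using img0[OF assms] MC by auto
      show "Nrect k \<subseteq> (red k \<circ> contr k) ` {c \<in> Mbox (2*k+1). \<not> c (k+1)}"
      proof
        fix g assume g: "g\<in>Nrect k"
        then obtain c where c: "c\<in>mob_colourings (2*k+1)" "c (k+1) = False" "red k (contr k c) = g"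
          using surj_rc[of g k False] by (auto simp: Nrect_def)
        then show "g \<in> (red k \<circ> contr k) ` {c \<in> Mbox (2*k+1). \<not> c (k+1)}"
          using img0[OF assms c(1)] g by (intro image_eqI[where x=c]) auto
      qed
    qed
  qed
  have B1: "bij_betw (red k \<circ> contr k) {c \<in> Mbox (2*k+1). c (k+1)} (Nrect_col k 1 \<union> Nrect_col k 2 \<union> {R_land})"
    unfolding bij_betw_def
  proof
    show "inj_on (red k \<circ> contr k) {c \<in> Mbox (2*k+1). c (k+1)}"
    proof (rule inj_onI)
      fix x y assume "x \<in> {c \<in> Mbox (2*k+1). c (k+1)}" "y \<in> {c \<in> Mbox (2*k+1). c (k+1)}"
        "(red k \<circ> contr k) x = (red k \<circ> contr k) y"
      then show "x = y" using inj_rc[of x k y] MC by auto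
    qed
    show "(red k \<circ> contr k) ` {c \<in> Mbox (2*k+1). c (k+1)} = Nrect_col k 1 \<union> Nrect_col k 2 \<union> {R_land}"
    proof
      show "(red k \<circ> contr k) ` {c \<in> Mbox (2*k+1). c (k+1)} \<subseteq> Nrect_col k 1 \<union> Nrect_col k 2 \<union> {R_land}"
        using img1[OF assms] MC by (auto simp del: Un_iff Un_insert_right)
      show "Nrect_col k 1 \<union> Nrect_col k 2 \<union> {R_land} \<subseteq> (red k \<circ> contr k) ` {c \<in> Mbox (2*k+1). c (k+1)}"
      proof
        fix g assume g: "g\<in>Nrect_col k 1 \<union> Nrect_col k 2 \<union> {R_land}"
        have "g \<in> grid_colourings k" using g R_land_Nrect
          by (auto simp: Nrect_col_def Nrect_def)
        then obtain c where c: "c\<in>mob_colourings (2*k+1)" "c (k+1) = True" "red k (contr k c) = g"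
          using surj_rc[of g k True] by auto
        then show "g \<in> (red k \<circ> contr k) ` {c \<in> Mbox (2*k+1). c (k+1)}"
          using img1[OF assms c(1)] g by (intro image_eqI[where x=c]) auto
      qed
    qed
  qed
  have finM: "finite (Mbox (2*k+1))" using MC finite_mob finite_subset by blast
  have split: "Mbox (2*k+1) = {c \<in> Mbox (2*k+1). \<not> c (k+1)} \<union> {c \<in> Mbox (2*k+1). c (k+1)}" by auto
  have cardM: "card (Mbox (2*k+1)) = card {c \<in> Mbox (2*k+1). \<not> c (k+1)} + card {c \<in> Mbox (2*k+1). c (k+1)}"
    by (subst split, rule card_Un_disjoint) (use finM in auto)
  have finN: "finite (Nrect k)"
    using B0 finM by (metis (no_types, lifting) bij_betw_imp_surj_on finite_imageI finite_subset mem_Collect_eq subsetI)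
  have f1: "finite (Nrect_col k 1)" "finite (Nrect_col k 2)"
    using finN by (auto simp: Nrect_col_def)
  have d12: "Nrect_col k 1 \<inter> Nrect_col k 2 = {}" by (auto simp: Nrect_col_def)
  have dR: "R_land \<notin> Nrect_col k 1 \<union> Nrect_col k 2" by (auto simp: Nrect_col_def R_land_def)
  have c12: "card (Nrect_col k 1 \<union> Nrect_col k 2 \<union> {R_land}) = card (Nrect_col k 1) + card (Nrect_col k 2) + 1"
    using f1 d12 dR by (simp add: card_Un_disjoint)
  show ?thesis
    using B0 B1 cardM c12 bij_betw_same_card[OF B0] bij_betw_same_card[OF B1] by simp
qed

end
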